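(* Let $\mathcal{G}=\langle\mathcal{Q},\mathbf{f}\rangle$ be a monotone NEP satisfying Assumption 2, with nonempty set of Nash equilibria, and let $\tau>0$ be such that $\boldsymbol{\Upsilon}_{\mathbf{F}_{\tau,\mathbf{y}}}$ is a P-matrix for every $\mathbf{y}$ (so $\mathcal{G}_{\tau,\mathbf{y}}$ has a unique NE $\mathbf{S}_\tau(\mathbf{y})$). Let $\{\varepsilon^{(n)}\}\subset[0,\infty)$ with $\sum_n\varepsilon^{(n)}<\infty$ and $\{\eta^{(n)}\}\subset[R_m,R_M]$ with $0<R_m\le R_M<2$. Consider any sequence defined by $\mathbf{x}^{(0)}\in\mathcal{Q}$ and, for $n\ge0$, $\mathbf{x}^{(n+1)}=(1-\eta^{(n)})\mathbf{x}^{(n)}+\eta^{(n)}\mathbf{z}^{(n)}$, where $\mathbf{z}^{(n)}$ is any point with $\|\mathbf{z}^{(n)}-\mathbf{S}_\tau(\mathbf{x}^{(n)})\|\le\varepsilon^{(n)}$. Then $\{\mathbf{x}^{(n)}\}$ converges to a NE of $\mathcal{G}$.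
   Context: Real NEP: player $i$ chooses $\mathbf{x}_i\in\mathcal{Q}_i\subseteq\mathbb{R}^{n_i}$ minimizing $f_i(\mathbf{x}_i,\mathbf{x}_{-i})$; $\mathcal{Q}=\prod_i\mathcal{Q}_i$. NE: $\mathbf{x}^\star\in\mathcal{Q}$ with $f_i(\mathbf{x}^\star_i,\mathbf{x}^\star_{-i})\le f_i(\mathbf{x}_i,\mathbf{x}^\star_{-i})$ for all $\mathbf{x}_i\in\mathcal{Q}_i$, all $i$. Assumption 1: $\mathcal{Q}_i$ nonempty closed convex, $f_i$ continuously differentiable on $\mathcal{Q}$ and convex in $\mathbf{x}_i$. Assumption 2: $f_i$ twice continuously differentiable with bounded derivatives on $\mathcal{Q}$. Monotone NEP: Assumption 1 and $\mathbf{F}(\mathbf{x})=(\nabla_{\mathbf{x}_i}f_i(\mathbf{x}))_i$ monotone on $\mathcal{Q}$. $\mathcal{G}_{\tau,\mathbf{y}}$: game where player $i$ minimizes $f_i(\mathbf{x}_i,\mathbf{x}_{-i})+\frac\tau2\|\mathbf{x}_i-\mathbf{y}_i\|^2$ over $\mathcal{Q}_i$, with gradient map $\mathbf{F}_{\tau,\mathbf{y}}=\mathbf{F}+\tau(\cdot-\mathbf{y})$. $\boldsymbol{\Upsilon}_{\mathbf{G}}$ for partitioned $\mathbf{G}$: diagonal $\inf_{\mathcal{Q}}\lambda_{\rm least}(\mathbf{J}_i\mathbf{G}_i)$, off-diagonal $-\sup_{\mathcal{Q}}\|\mathbf{J}_j\mathbf{G}_i\|_2$, $\lambda_{\rm least}(\mathbf{A})$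 smallest eigenvalue of $(\mathbf{A}+\mathbf{A}^T)/2$. P-matrix: all principal minors positive. *)

theory Defs
  imports "HOL-Analysis.Analysis"
begin

text \<open>Strategy profiles live in real^'n; the coordinates are partitioned among the
players 'i by the block map p :: 'n => 'i (player i owns coordinates {k. p k = i}).
A player's strategy set Q_i is represented as a set of vectors supported on block i.\<close>

definition blockset :: "('n \<Rightarrow> 'i) \<Rightarrow> 'i \<Rightarrow> 'n set" where
  "blockset p i = {k. p k = i}"

definition blk :: "('n::finite \<Rightarrow> 'i) \<Rightarrow> 'i \<Rightarrow> real^'n \<Rightarrow> real^'n" where
  "blk p i x = (\<chi> k. if p k = i then x $ k else 0)"

definition upd :: "('n::finite \<Rightarrow> 'i) \<Rightarrow> 'i \<Rightarrow> real^'n \<Rightarrow> real^'n \<Rightarrow> real^'n" where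
  "upd p i x v = (\<chi> k. if p k = i then v $ k else x $ k)"

definition prof_set :: "('n::finite \<Rightarrow> 'i) \<Rightarrow> ('i \<Rightarrow> (real^'n) set) \<Rightarrow> (real^'n) set" where
  "prof_set p Qi = {x. \<forall>i. blk p i x \<in> Qi i}"

definition is_NE :: "('n::finite \<Rightarrow> 'i) \<Rightarrow> ('i \<Rightarrow> (real^'n) set) \<Rightarrow> ('i \<Rightarrow> real^'n \<Rightarrow> real)
    \<Rightarrow> real^'n \<Rightarrow> bool" where
  "is_NE p Qi f x \<longleftrightarrow> x \<in> prof_set p Qi \<and> (\<forall>i. \<forall>v\<in>Qi i. f i x \<le> f i (upd p i x v))"

definition reg_game :: "('n::finite \<Rightarrow> 'i) \<Rightarrow> real \<Rightarrow> real^'n \<Rightarrow> ('i \<Rightarrow> real^'n \<Rightarrow> real)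
    \<Rightarrow> 'i \<Rightarrow> real^'n \<Rightarrow> real" where
  "reg_game p \<tau> y f = (\<lambda>i x. f i x + \<tau> / 2 * (norm (blk p i x - blk p i y))^2)"

text \<open>F(x) = (grad_{x_i} f_i(x))_i, from the full gradients Df i of the f i.\<close>
definition pgrad :: "('n::finite \<Rightarrow> 'i) \<Rightarrow> ('i \<Rightarrow> real^'n \<Rightarrow> real^'n) \<Rightarrow> real^'n \<Rightarrow> real^'n" where
  "pgrad p Df x = (\<chi> k. Df (p k) x $ k)"

text \<open>Jacobian of F, from the Hessians Hf i of the f i.\<close>
definition pjac :: "('n::finite \<Rightarrow> 'i) \<Rightarrow> ('i \<Rightarrow> real^'n \<Rightarrow> real^'n^'n) \<Rightarrow> real^'n \<Rightarrow> real^'n^'n" where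
  "pjac p Hf x = (\<chi> k l. Hf (p k) x $ k $ l)"

definition sym_eigs :: "'n set \<Rightarrow> ('n \<Rightarrow> 'n \<Rightarrow> real) \<Rightarrow> real set" where
  "sym_eigs B A = {lam. \<exists>v. (\<exists>k\<in>B. v k \<noteq> 0) \<and>
      (\<forall>k\<in>B. (\<Sum>l\<in>B. (A k l + A l k) / 2 * v l) = lam * v k)}"

definition lam_least :: "'n set \<Rightarrow> ('n \<Rightarrow> 'n \<Rightarrow> real) \<Rightarrow> real" where
  "lam_least B A = Inf (sym_eigs B A)"

definition norm2 :: "'n set \<Rightarrow> 'n set \<Rightarrow> ('n \<Rightarrow> 'n \<Rightarrow> real) \<Rightarrow> real" where
  "norm2 Bi Bj A = Sup {sqrt (\<Sum>k\<in>Bi. (\<Sum>l\<in>Bj. A k l * v l)^2) | v. (\<Sum>l\<in>Bj. (v l)^2) \<le> 1}"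

definition Upsilon :: "('n::finite \<Rightarrow> 'i) \<Rightarrow> (real^'n) set \<Rightarrow> (real^'n \<Rightarrow> real^'n^'n)
    \<Rightarrow> 'i \<Rightarrow> 'i \<Rightarrow> real" where
  "Upsilon p Q J = (\<lambda>i j. if i = j
      then (INF x\<in>Q. lam_least (blockset p i) (\<lambda>k l. J x $ k $ l))
      else - (SUP x\<in>Q. norm2 (blockset p i) (blockset p j) (\<lambda>k l. J x $ k $ l)))"

definition det_on :: "'i set \<Rightarrow> ('i \<Rightarrow> 'i \<Rightarrow> real) \<Rightarrow> real" where
  "det_on S A = (\<Sum>\<sigma> | \<sigma> permutes S. of_int (sign \<sigma>) * (\<Prod>i\<in>S. A i (\<sigma> i)))"

definition P_matrix :: "('i::finite \<Rightarrow> 'i \<Rightarrow> real) \<Rightarrow> bool" where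
  "P_matrix M \<longleftrightarrow> (\<forall>S. S \<noteq> {} \<longrightarrow> det_on S M > 0)"

end

theory Submission
  imports Defs
begin
lemma blk_linear: "linear (blk p i)"
  by (rule linearI) (auto simp: blk_def vec_eq_iff)

lemma blk_add: "blk p i (x + y) = blk p i x + blk p i y"
  and blk_diff: "blk p i (x - y) = blk p i x - blk p i y"
  and blk_scale: "blk p i (c *\<^sub>R x) = c *\<^sub>R blk p i x"
  and blk_blk: "blk p i (blk p i x) = blk p i x"
  by (auto simp: blk_def vec_eq_iff)

lemma upd_eq: "upd p i x v = x - blk p i x + blk p i v"
  by (auto simp: upd_def blk_def vec_eq_iff)

lemma blk_upd: "blk p j (upd p i x v) = (if j = i then blk p i v else blk p j x)"
  by (auto simp: upd_def blk_def vec_eq_iff)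

lemma inner_blk: "blk p i a \<bullet> b = (\<Sum>k\<in>UNIV. if p k = i then a $ k * b $ k else 0)"
  by (auto simp: blk_def inner_vec_def intro!: sum.cong)

lemma pgrad_inner:
  fixes p :: "'n::finite \<Rightarrow> 'i::finite"
  shows "pgrad p D x \<bullet> h = (\<Sum>i\<in>UNIV. D i x \<bullet> blk p i h)"
proof -
  have "(\<Sum>i\<in>UNIV. D i x \<bullet> blk p i h) = (\<Sum>i\<in>UNIV. blk p i h \<bullet> D i x)"
    by (simp add: inner_commute)
  also have "\<dots> = (\<Sum>i\<in>UNIV. \<Sum>k\<in>UNIV. if p k = i then h $ k * D i x $ k else 0)"
    by (simp add: inner_blk)
  also have "\<dots> = (\<Sum>k\<in>UNIV. \<Sum>i\<in>UNIV. if p k = i then h $ k * D i x $ k else 0)"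
    by (rule sum.swap)
  also have "\<dots> = (\<Sum>k\<in>UNIV. h $ k * D (p k) x $ k)"
    by (simp add: sum.delta)
  also have "\<dots> = pgrad p D x \<bullet> h" by (simp add: pgrad_def inner_vec_def mult.commute)
  finally show ?thesis by simp
qed

lemma sum_blk: "(\<Sum>i\<in>(UNIV::'i::finite set). blk p i x) = x"
  by (simp add: blk_def vec_eq_iff sum_component if_distrib sum.delta cong: if_cong)

lemma blk_blk_ne: "i \<noteq> j \<Longrightarrow> blk p j (blk p i x) = 0"
  by (auto simp: blk_def vec_eq_iff)

lemma dir_lim:
  fixes g :: "real^'n \<Rightarrow> real"
  assumes "(g has_derivative (\<lambda>h. D \<bullet> h)) (at x)"
  shows "((\<lambda>t. (g (x + t *\<^sub>R h) - g x) / t) \<longlongrightarrow> D \<bullet> h) (at_right 0)"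
proof -
  have l: "((\<lambda>t::real. x + t *\<^sub>R h) has_derivative (\<lambda>t. t *\<^sub>R h)) (at 0)"
    by (auto intro!: derivative_eq_intros)
  have g0: "(g has_derivative (\<lambda>h. D \<bullet> h)) (at (x + 0 *\<^sub>R h))" using assms by simp
  have "((\<lambda>t. g (x + t *\<^sub>R h)) has_derivative (\<lambda>t. D \<bullet> (t *\<^sub>R h))) (at 0)"
    using has_derivative_compose[OF l g0] by (simp add: o_def)
  then have "((\<lambda>t. g (x + t *\<^sub>R h)) has_derivative (\<lambda>t. t * (D \<bullet> h))) (at 0)"
    by (simp add: mult.commute)
  then have "((\<lambda>t. g (x + t *\<^sub>R h)) has_field_derivative (D \<bullet> h)) (at 0)"
    by (simp add: has_field_derivative_def mult_commute_abs)
  then have "((\<lambda>t. (g (x + (0 + t) *\<^sub>R h) - g (x + 0 *\<^sub>R h)) / t) \<longlongrightarrow> D \<bullet> h) (at 0)"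
    unfolding DERIV_def .
  then have "((\<lambda>t. (g (x + t *\<^sub>R h) - g x) / t) \<longlongrightarrow> D \<bullet> h) (at 0)" by simp
  then show ?thesis using tendsto_mono at_le at_within_le_at by blast
qed

lemma sq_convex:
  fixes c :: "'a::real_inner"
  assumes "convex S"
  shows "convex_on S (\<lambda>v. (norm (v - c))^2)"
proof (rule convex_onI[OF _ assms])
  fix t :: real and x y assume t: "0 < t" "t < 1" and "x \<in> S" "y \<in> S"
  define a where "a = x - c"
  define b where "b = y - c"
  have e: "(1 - t) *\<^sub>R x + t *\<^sub>R y - c = (1 - t) *\<^sub>R a + t *\<^sub>R b"
    by (simp add: a_def b_def algebra_simps)
  have "(1 - t) * (norm a)^2 + t * (norm b)^2 - (norm ((1 - t) *\<^sub>R a + t *\<^sub>R b))^2 = t * (1 - t) * (norm (a - b))^2"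
    unfolding power2_norm_eq_inner
    by (simp add: inner_add_left inner_add_right inner_diff_left inner_diff_right inner_commute[of b a] algebra_simps power2_eq_square)
  moreover have "0 \<le> t * (1 - t) * (norm (a - b))^2" using t by simp
  ultimately show "(norm ((1 - t) *\<^sub>R x + t *\<^sub>R y - c))^2 \<le> (1 - t) * (norm (x - c))^2 + t * (norm (y - c))^2"
    unfolding e a_def[symmetric] b_def[symmetric] by linarith
qed

locale game =
  fixes p :: "'n::finite \<Rightarrow> 'i::finite" and Qi :: "'i \<Rightarrow> (real^'n) set"
  assumes Qi_block: "\<And>i. Qi i \<subseteq> {v. blk p i v = v}"
    and Qi_ne: "\<And>i. Qi i \<noteq> {}"
    and Qi_closed: "\<And>i. closed (Qi i)"
    and Qi_convex: "\<And>i. convex (Qi i)"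
begin

abbreviation "Q \<equiv> prof_set p Qi"

lemma blkQ: "x \<in> Q \<Longrightarrow> blk p i x \<in> Qi i" by (simp add: prof_set_def)

lemma Qi_blk: "v \<in> Qi i \<Longrightarrow> blk p i v = v" using Qi_block by auto

lemma upd_in: "x \<in> Q \<Longrightarrow> v \<in> Qi i \<Longrightarrow> upd p i x v \<in> Q"
  by (auto simp: prof_set_def blk_upd Qi_blk)

lemma Q_closed: "closed Q"
proof -
  have "Q = (\<Inter>i. blk p i -` Qi i)" by (auto simp: prof_set_def)
  moreover have "closed (blk p i -` Qi i)" for i
    by (rule closed_vimage[OF Qi_closed]) (meson blk_linear linear_continuous_on linear_conv_bounded_linear)
  ultimately show ?thesis by auto
qed

lemma Q_convex: "convex Q"
  unfolding convex_def
proof (intro ballI allI impI)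
  fix x y and u v :: real
  assume "x \<in> Q" "y \<in> Q" "0 \<le> u" "0 \<le> v" "u + v = 1"
  then show "u *\<^sub>R x + v *\<^sub>R y \<in> Q"
    using Qi_convex unfolding prof_set_def convex_def by (auto simp: blk_add blk_scale)
qed

lemma Q_ne: "Q \<noteq> {}"
proof -
  have "\<forall>i. \<exists>v. v \<in> Qi i" using Qi_ne by blast
  then obtain q where q: "\<And>i. q i \<in> Qi i" by metis
  define x where "x = (\<Sum>i\<in>UNIV. q i)"
  have "blk p j x = q j" for j
  proof -
    have "blk p j x = (\<Sum>i\<in>UNIV. blk p j (q i))"
      unfolding x_def by (rule linear_sum[OF blk_linear])
    also have "\<dots> = (\<Sum>i\<in>UNIV. if i = j then q j else 0)"
    proof (rule sum.cong)
      fix i assume "i \<in> (UNIV::'i set)"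
      show "blk p j (q i) = (if i = j then q j else 0)"
        using blk_blk_ne[of i j p "q i"] Qi_blk[OF q[of i]] by auto
    qed simp
    finally show ?thesis by simp
  qed
  then have "x \<in> Q" using q by (simp add: prof_set_def)
  then show ?thesis by auto
qed

lemma upd_line: "upd p i x (blk p i x + t *\<^sub>R (v - blk p i x)) = x + t *\<^sub>R (v - blk p i x)"
  if "v \<in> Qi i" for t
  using that by (simp add: upd_eq blk_add blk_scale blk_diff blk_blk Qi_blk)

lemma pgrad_blockdir:
  assumes "v \<in> Qi i"
  shows "pgrad p Dg x \<bullet> (upd p i x v - x) = Dg i x \<bullet> (v - blk p i x)"
proof -
  have "blk p j (upd p i x v - x) = (if j = i then v - blk p i x else 0)" for j
    using assms by (auto simp: blk_diff blk_upd Qi_blk)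
  then have "(\<Sum>j\<in>UNIV. Dg j x \<bullet> blk p j (upd p i x v - x)) = (\<Sum>j\<in>UNIV. if j = i then Dg i x \<bullet> (v - blk p i x) else 0)"
    by (intro sum.cong) auto
  then show ?thesis by (simp add: pgrad_inner)
qed

lemma NE_imp_VI:
  assumes x: "x \<in> Q" and der: "\<And>i. (g i has_derivative (\<lambda>h. Dg i x \<bullet> h)) (at x)"
    and ne: "is_NE p Qi g x"
  shows "\<forall>w\<in>Q. 0 \<le> pgrad p Dg x \<bullet> (w - x)"
proof
  fix w assume w: "w \<in> Q"
  have "0 \<le> Dg i x \<bullet> (v - blk p i x)" if v: "v \<in> Qi i" for i v
  proof (rule tendsto_lowerbound[OF dir_lim[OF der]])
    show "\<forall>\<^sub>F t in at_right 0. 0 \<le> (g i (x + t *\<^sub>R (v - blk p i x)) - g i x) / t"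
      unfolding eventually_at_right_field
    proof (intro exI[of _ 1] conjI allI impI)
      fix t :: real assume t0: "0 < t" and t1: "t < 1"
      have t: "0 < t \<and> t < 1" using t0 t1 by simp
      have "blk p i x + t *\<^sub>R (v - blk p i x) = (1 - t) *\<^sub>R blk p i x + t *\<^sub>R v"
        by (simp add: algebra_simps)
      also have "\<dots> \<in> Qi i"
        using convexD_alt[OF Qi_convex blkQ[OF x] v, of t] t by auto
      finally have "g i x \<le> g i (x + t *\<^sub>R (v - blk p i x))"
        using ne upd_line[OF v] unfolding is_NE_def by metis
      then show "0 \<le> (g i (x + t *\<^sub>R (v - blk p i x)) - g i x) / t" using t by (auto intro!: divide_nonneg_pos)
    qed simp
  qed simp
  note dd = this
  show "0 \<le> pgrad p Dg x \<bullet> (w - x)"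
    unfolding pgrad_inner blk_diff by (intro sum_nonneg) (simp add: dd blkQ[OF w])
qed

lemma VI_imp_NE:
  assumes x: "x \<in> Q" and der: "\<And>i. (g i has_derivative (\<lambda>h. Dg i x \<bullet> h)) (at x)"
    and conv: "\<And>i. convex_on (Qi i) (\<lambda>v. g i (upd p i x v))"
    and vi: "\<forall>w\<in>Q. 0 \<le> pgrad p Dg x \<bullet> (w - x)"
  shows "is_NE p Qi g x"
  unfolding is_NE_def
proof (intro conjI allI ballI x)
  fix i v assume v: "v \<in> Qi i"
  have d: "0 \<le> Dg i x \<bullet> (v - blk p i x)"
    using vi upd_in[OF x v] pgrad_blockdir[OF v] by metis
  have ux: "upd p i x (blk p i x) = x" by (simp add: upd_eq blk_blk)
  have "Dg i x \<bullet> (v - blk p i x) \<le> g i (upd p i x v) - g i x"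
  proof (rule tendsto_upperbound[OF dir_lim[OF der]])
    show "\<forall>\<^sub>F t in at_right 0. (g i (x + t *\<^sub>R (v - blk p i x)) - g i x) / t \<le> g i (upd p i x v) - g i x"
      unfolding eventually_at_right_field
    proof (intro exI[of _ 1] conjI allI impI)
      fix t :: real assume t0: "0 < t" and t1: "t < 1"
      have t: "0 < t \<and> t < 1" using t0 t1 by simp
      have e: "blk p i x + t *\<^sub>R (v - blk p i x) = (1 - t) *\<^sub>R blk p i x + t *\<^sub>R v"
        by (simp add: algebra_simps)
      have "g i (upd p i x ((1 - t) *\<^sub>R blk p i x + t *\<^sub>R v))
            \<le> (1 - t) * g i (upd p i x (blk p i x)) + t * g i (upd p i x v)"
        using convex_onD[OF conv[of i], of t "blk p i x" v] t blkQ[OF x] v by auto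
      moreover have "upd p i x ((1 - t) *\<^sub>R blk p i x + t *\<^sub>R v) = x + t *\<^sub>R (v - blk p i x)"
        using upd_line[OF v, of x t] e by simp
      ultimately have A: "g i (x + t *\<^sub>R (v - blk p i x)) \<le> (1 - t) * g i x + t * g i (upd p i x v)"
        using ux by metis
      define G where "G = g i (x + t *\<^sub>R (v - blk p i x))"
      have "G - g i x \<le> t * (g i (upd p i x v) - g i x)"
        using A unfolding G_def[symmetric] by (simp add: algebra_simps)
      then have "g i (x + t *\<^sub>R (v - blk p i x)) - g i x \<le> t * (g i (upd p i x v) - g i x)"
        unfolding G_def .
      then show "(g i (x + t *\<^sub>R (v - blk p i x)) - g i x) / t \<le> g i (upd p i x v) - g i x"
        using t by (simp add: divide_le_eq mult.commute)
    qed simp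
  qed simp
  then show "g i x \<le> g i (upd p i x v)" using d by simp
qed


lemma reg_eq: "v \<in> Qi i \<Longrightarrow> reg_game p \<tau> y f i (upd p i x v) = f i (upd p i x v) + \<tau> / 2 * (norm (v - blk p i y))^2"
  by (simp add: reg_game_def blk_upd Qi_blk)

lemma reg_convex:
  assumes fc: "convex_on (Qi i) (\<lambda>v. f i (upd p i x v))" and tau: "\<tau> \<ge> 0"
  shows "convex_on (Qi i) (\<lambda>v. reg_game p \<tau> y f i (upd p i x v))"
proof (rule convex_onI[OF _ Qi_convex])
  fix t :: real and a b assume t: "0 < t" "t < 1" and ab: "a \<in> Qi i" "b \<in> Qi i"
  have m: "(1 - t) *\<^sub>R a + t *\<^sub>R b \<in> Qi i" using convexD_alt[OF Qi_convex ab, of t] t by auto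
  have sq: "convex_on (Qi i) (\<lambda>v. (norm (v - blk p i y))^2)" by (rule sq_convex[OF Qi_convex])
  have 1: "f i (upd p i x ((1 - t) *\<^sub>R a + t *\<^sub>R b)) \<le> (1 - t) * f i (upd p i x a) + t * f i (upd p i x b)"
    using convex_onD[OF fc, of t a b] t ab by auto
  have 2: "(norm ((1 - t) *\<^sub>R a + t *\<^sub>R b - blk p i y))^2 \<le> (1 - t) * (norm (a - blk p i y))^2 + t * (norm (b - blk p i y))^2"
    using convex_onD[OF sq, of t a b] t ab by auto
  have 3: "\<tau> / 2 * (norm ((1 - t) *\<^sub>R a + t *\<^sub>R b - blk p i y))^2 \<le> \<tau> / 2 * ((1 - t) * (norm (a - blk p i y))^2 + t * (norm (b - blk p i y))^2)"
    using 2 tau by (intro mult_left_mono) auto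
  show "reg_game p \<tau> y f i (upd p i x ((1 - t) *\<^sub>R a + t *\<^sub>R b))
         \<le> (1 - t) * reg_game p \<tau> y f i (upd p i x a) + t * reg_game p \<tau> y f i (upd p i x b)"
  proof -
    have E: "\<And>F1 F2 N1 N2::real. (1 - t) * (F1 + \<tau> / 2 * N1) + t * (F2 + \<tau> / 2 * N2) = ((1 - t) * F1 + t * F2) + \<tau> / 2 * ((1 - t) * N1 + t * N2)"
      by (simp add: field_simps)
    show ?thesis unfolding reg_eq[OF m] reg_eq[OF ab(1)] reg_eq[OF ab(2)] E using 1 3 by linarith
  qed
qed

end

lemma blk_inner_blk: "blk p i a \<bullet> blk p i h = blk p i a \<bullet> h"
  unfolding inner_vec_def blk_def by (intro sum.cong) auto

lemma reg_deriv:
  assumes "(f i has_derivative (\<lambda>h. Df i x \<bullet> h)) (at x)"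
  shows "(reg_game p \<tau> y f i has_derivative (\<lambda>h. (Df i x + \<tau> *\<^sub>R blk p i (x - y)) \<bullet> h)) (at x)"
proof -
  have bl: "bounded_linear (blk p i)" by (rule linear_conv_bounded_linear[THEN iffD1, OF blk_linear])
  have d1: "((\<lambda>x. blk p i x - blk p i y) has_derivative blk p i) (at x)"
    using has_derivative_diff[OF bounded_linear_imp_has_derivative[OF bl] has_derivative_const[of "blk p i y"]]
    by simp
  have d2: "((\<lambda>x. (blk p i x - blk p i y) \<bullet> (blk p i x - blk p i y)) has_derivative
     (\<lambda>h. (blk p i x - blk p i y) \<bullet> blk p i h + blk p i h \<bullet> (blk p i x - blk p i y))) (at x)"
    by (rule has_derivative_inner[OF d1 d1])
  have e1: "(\<lambda>x. (norm (blk p i x - blk p i y))^2) = (\<lambda>x. (blk p i x - blk p i y) \<bullet> (blk p i x - blk p i y))"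
    by (simp add: power2_norm_eq_inner)
  have e2: "(\<lambda>h. (blk p i x - blk p i y) \<bullet> blk p i h + blk p i h \<bullet> (blk p i x - blk p i y)) = (\<lambda>h. 2 * (blk p i (x - y) \<bullet> h))"
  proof
    fix h
    have "blk p i h \<bullet> (blk p i x - blk p i y) = (blk p i x - blk p i y) \<bullet> blk p i h"
      by (rule inner_commute)
    then show "(blk p i x - blk p i y) \<bullet> blk p i h + blk p i h \<bullet> (blk p i x - blk p i y) = 2 * (blk p i (x - y) \<bullet> h)"
      using blk_inner_blk[of p i "x - y" h] by (simp only: blk_diff mult_2)
  qed
  have q: "((\<lambda>x. (norm (blk p i x - blk p i y))^2) has_derivative (\<lambda>h. 2 * (blk p i (x - y) \<bullet> h))) (at x)"
    using d2 unfolding e1 e2 .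
  have "(reg_game p \<tau> y f i has_derivative (\<lambda>h. Df i x \<bullet> h + \<tau> / 2 * (2 * (blk p i (x - y) \<bullet> h)))) (at x)"
    unfolding reg_game_def by (rule has_derivative_add[OF assms has_derivative_mult_right[OF q]])
  moreover have "(\<lambda>h. Df i x \<bullet> h + \<tau> / 2 * (2 * (blk p i (x - y) \<bullet> h))) = (\<lambda>h. (Df i x + \<tau> *\<^sub>R blk p i (x - y)) \<bullet> h)"
    by (simp add: fun_eq_iff inner_add_left)
  ultimately show ?thesis by simp
qed

lemma pgrad_reg: "pgrad p (\<lambda>i x. Df i x + \<tau> *\<^sub>R blk p i (x - y)) x = pgrad p Df x + \<tau> *\<^sub>R (x - y)"
proof -
  have "pgrad p (\<lambda>i x. Df i x + \<tau> *\<^sub>R blk p i (x - y)) x $ k = (pgrad p Df x + \<tau> *\<^sub>R (x - y)) $ k" for k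
    by (simp add: pgrad_def blk_def)
  then show ?thesis by (simp add: vec_eq_iff)
qed


lemma contr_step:
  fixes d e :: "'a::real_inner"
  assumes "\<tau> * (norm d)^2 \<le> e \<bullet> d" "norm e \<le> L * norm d" "0 < \<tau>" "\<tau> \<le> L" "\<gamma> = \<tau> / L^2"
  shows "(norm (d - \<gamma> *\<^sub>R e))^2 \<le> (1 - \<tau>^2 / L^2) * (norm d)^2"
proof -
  have L: "L > 0" using assms by simp
  have "(norm (d - \<gamma> *\<^sub>R e))^2 = (norm d)^2 - 2 * \<gamma> * (e \<bullet> d) + \<gamma>^2 * (norm e)^2"
    unfolding power2_norm_eq_inner by (simp add: inner_diff_left inner_diff_right inner_commute[of e d] power2_eq_square algebra_simps)
  also have "\<dots> \<le> (norm d)^2 - 2 * \<gamma> * (\<tau> * (norm d)^2) + \<gamma>^2 * (L * norm d)^2"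
  proof -
    have g: "\<gamma> \<ge> 0" using assms L by simp
    have "\<gamma>^2 * (norm e)^2 \<le> \<gamma>^2 * (L * norm d)^2"
      by (intro mult_left_mono power_mono) (use assms in auto)
    moreover have "2 * \<gamma> * (\<tau> * (norm d)^2) \<le> 2 * \<gamma> * (e \<bullet> d)"
      using g assms(1) by (simp add: mult_left_mono)
    ultimately show ?thesis by linarith
  qed
  also have "\<dots> = (1 - \<tau>^2 / L^2) * (norm d)^2"
    using L unfolding assms(5) by (simp add: field_simps power2_eq_square)
  finally show ?thesis .
qed

lemma VI_exists:
  fixes G :: "'a::euclidean_space \<Rightarrow> 'a"
  assumes C: "closed C" "convex C" "C \<noteq> {}"
    and sm: "\<forall>x\<in>C. \<forall>y\<in>C. \<tau> * (norm (x - y))^2 \<le> (G x - G y) \<bullet> (x - y)"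
    and lip: "\<forall>x\<in>C. \<forall>y\<in>C. norm (G x - G y) \<le> L * norm (x - y)"
    and tau: "\<tau> > 0"
  shows "\<exists>x\<in>C. \<forall>w\<in>C. 0 \<le> G x \<bullet> (w - x)"
proof -
  define L' where "L' = max L \<tau>"
  have L': "L' > 0" "\<tau> \<le> L'" using tau by (auto simp: L'_def)
  define \<gamma> where "\<gamma> = \<tau> / L'^2"
  define c where "c = sqrt (1 - \<tau>^2 / L'^2)"
  have q: "0 \<le> \<tau>^2 / L'^2" "\<tau>^2 / L'^2 \<le> 1" "0 < \<tau>^2 / L'^2"
  proof -
    have "\<tau>^2 \<le> L'^2" using L' tau by (intro power_mono) auto
    moreover have "L'^2 > 0" using L' by simp
    ultimately show "0 \<le> \<tau>^2 / L'^2" "\<tau>^2 / L'^2 \<le> 1" "0 < \<tau>^2 / L'^2"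
      using tau by (auto simp: divide_le_eq_1)
  qed
  have c: "0 \<le> c" "c < 1" using q by (auto simp: c_def)
  define P where "P = closest_point C"
  have PC: "P x \<in> C" for x unfolding P_def using closest_point_in_set C by blast
  have Plip: "dist (P x) (P y) \<le> dist x y" for x y
    unfolding P_def using closest_point_lipschitz C by blast
  define \<Phi> where "\<Phi> x = P (P x - \<gamma> *\<^sub>R G (P x))" for x
  have step: "norm ((a - \<gamma> *\<^sub>R G a) - (b - \<gamma> *\<^sub>R G b)) \<le> c * norm (a - b)" if "a \<in> C" "b \<in> C" for a b
  proof -
    have lipL: "norm (G a - G b) \<le> L' * norm (a - b)"
    proof -
      have "norm (G a - G b) \<le> L * norm (a - b)" using lip that by blast
      also have "\<dots> \<le> L' * norm (a - b)" unfolding L'_def by (intro mult_right_mono) auto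
      finally show ?thesis .
    qed
    have "(norm ((a - b) - \<gamma> *\<^sub>R (G a - G b)))^2 \<le> (1 - \<tau>^2 / L'^2) * (norm (a - b))^2"
      by (rule contr_step[OF _ lipL tau L'(2) \<gamma>_def]) (use sm that in \<open>simp add: inner_commute\<close>)
    then have "(norm ((a - b) - \<gamma> *\<^sub>R (G a - G b)))^2 \<le> (c * norm (a - b))^2"
      using q by (simp only: c_def power_mult_distrib real_sqrt_pow2_iff) simp
    then have "norm ((a - b) - \<gamma> *\<^sub>R (G a - G b)) \<le> c * norm (a - b)"
      using c by (meson mult_nonneg_nonneg norm_ge_zero power2_le_imp_le)
    then show ?thesis by (simp add: algebra_simps)
  qed
  have "\<forall>x y. dist (\<Phi> x) (\<Phi> y) \<le> c * dist x y"
  proof (intro allI)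
    fix x y
    have "dist (\<Phi> x) (\<Phi> y) \<le> dist (P x - \<gamma> *\<^sub>R G (P x)) (P y - \<gamma> *\<^sub>R G (P y))"
      unfolding \<Phi>_def by (rule Plip)
    also have "\<dots> \<le> c * dist (P x) (P y)" using step[OF PC PC] by (simp add: dist_norm)
    also have "\<dots> \<le> c * dist x y" using Plip c by (simp add: mult_left_mono)
    finally show "dist (\<Phi> x) (\<Phi> y) \<le> c * dist x y" .
  qed
  then obtain x where x: "\<Phi> x = x" using banach_fix_type[OF c] by blast
  have xC: "x \<in> C" using x PC unfolding \<Phi>_def by metis
  have Px: "P x = x" unfolding P_def using closest_point_self[OF xC] .
  have fx: "P (x - \<gamma> *\<^sub>R G x) = x" using x unfolding \<Phi>_def Px .
  have "\<forall>w\<in>C. 0 \<le> G x \<bullet> (w - x)"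
  proof
    fix w assume w: "w \<in> C"
    have "(x - \<gamma> *\<^sub>R G x - P (x - \<gamma> *\<^sub>R G x)) \<bullet> (w - P (x - \<gamma> *\<^sub>R G x)) \<le> 0"
      unfolding P_def by (rule closest_point_dot[OF C(2,1) w])
    then have "- \<gamma> * (G x \<bullet> (w - x)) \<le> 0" unfolding fx by simp
    moreover have "\<gamma> > 0" using tau L' by (simp add: \<gamma>_def)
    ultimately show "0 \<le> G x \<bullet> (w - x)" by (simp add: zero_le_mult_iff mult_le_0_iff)
  qed
  then show ?thesis using xC by blast
qed


lemma fejer_step:
  fixes S :: "'a::real_inner \<Rightarrow> 'a"
  assumes firm: "(norm (S x - S q))^2 \<le> (x - q) \<bullet> (S x - S q)"
    and fq: "S q = q" and eta: "Rm \<le> \<eta>" "\<eta> \<le> RM" and Rm: "0 < Rm" and RM: "RM < 2"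
    and zx: "dist z (S x) \<le> e" and x': "x' = (1 - \<eta>) *\<^sub>R x + \<eta> *\<^sub>R z"
  shows "norm (x' - q) \<le> norm (x - q) + 2 * e"
    and "Rm * (2 - RM) * (norm (S x - x))^2 \<le> (norm (x - q))^2 - (max 0 (norm (x' - q) - 2 * e))^2"
proof -
  define d where "d = x - q"
  define s where "s = S x - q"
  define W where "W = x + \<eta> *\<^sub>R (S x - x)"
  have e0: "0 \<le> e" using zx by (meson order_trans zero_le_dist)
  have firm': "s \<bullet> s \<le> d \<bullet> s" using firm fq unfolding d_def s_def by (simp add: power2_norm_eq_inner)
  have Wq: "W - q = d + \<eta> *\<^sub>R (s - d)" unfolding W_def d_def s_def by (simp add: algebra_simps)
  have Sx: "S x - x = s - d" unfolding d_def s_def by simp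
  have etapos: "0 < \<eta>" using eta Rm by simp
  have key: "(norm (W - q))^2 \<le> (norm d)^2 - \<eta> * (2 - \<eta>) * (norm (s - d))^2"
  proof -
    have e1: "(norm (W - q))^2 = d \<bullet> d + 2 * \<eta> * (d \<bullet> s) - 2 * \<eta> * (d \<bullet> d) + \<eta>^2 * (s \<bullet> s - 2 * (d \<bullet> s) + d \<bullet> d)"
      unfolding Wq power2_norm_eq_inner
      by (simp add: inner_add_left inner_add_right inner_diff_left inner_diff_right inner_commute[of s d] algebra_simps power2_eq_square)
    have e2: "(norm (s - d))^2 = s \<bullet> s - 2 * (d \<bullet> s) + d \<bullet> d"
      unfolding power2_norm_eq_inner
      by (simp add: inner_diff_left inner_diff_right inner_commute[of s d])
    have e3: "(norm d)^2 = d \<bullet> d" by (simp add: power2_norm_eq_inner)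
    have "0 \<le> \<eta> * (d \<bullet> s - s \<bullet> s)" using etapos firm' by simp
    then show ?thesis unfolding e1 e2 e3 by (simp add: algebra_simps power2_eq_square)
  qed
  have cst: "Rm * (2 - RM) \<le> \<eta> * (2 - \<eta>)"
    using eta Rm RM by (intro mult_mono) auto
  have nW: "norm (W - q) \<le> norm d"
  proof -
    have "0 \<le> \<eta> * (2 - \<eta>) * (norm (s - d))^2" using etapos eta RM by simp
    then have "(norm (W - q))^2 \<le> (norm d)^2" using key by linarith
    then show ?thesis by (rule power2_le_imp_le) simp
  qed
  have xW: "norm (x' - W) \<le> 2 * e"
  proof -
    have "x' - W = \<eta> *\<^sub>R (z - S x)" unfolding x' W_def by (simp add: algebra_simps)
    then have "norm (x' - W) = \<eta> * norm (z - S x)" using etapos by simp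
    also have "\<dots> \<le> 2 * e"
      using zx eta RM etapos e0 by (intro mult_mono) (auto simp: dist_norm)
    finally show ?thesis .
  qed
  have tri: "norm (x' - q) \<le> norm (W - q) + 2 * e"
    using norm_triangle_ineq[of "x' - W" "W - q"] xW by simp
  show "norm (x' - q) \<le> norm (x - q) + 2 * e" using tri nW unfolding d_def by simp
  have m: "(max 0 (norm (x' - q) - 2 * e))^2 \<le> (norm (W - q))^2"
    using tri by (intro power_mono) auto
  have "Rm * (2 - RM) * (norm (S x - x))^2 \<le> \<eta> * (2 - \<eta>) * (norm (S x - x))^2"
    using cst by (intro mult_right_mono) auto
  then show "Rm * (2 - RM) * (norm (S x - x))^2 \<le> (norm (x - q))^2 - (max 0 (norm (x' - q) - 2 * e))^2"
    using key m unfolding Sx d_def by linarith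
qed


lemma KM_conv:
  fixes S :: "'a::euclidean_space \<Rightarrow> 'a" and X Z :: "nat \<Rightarrow> 'a"
  assumes firm: "\<And>y1 y2. (norm (S y1 - S y2))^2 \<le> (y1 - y2) \<bullet> (S y1 - S y2)"
    and fixex: "\<exists>q. S q = q"
    and eps: "\<And>n. 0 \<le> eps n" "summable eps"
    and eta: "\<And>n. Rm \<le> eta n \<and> eta n \<le> RM" and Rm: "0 < Rm" and RM: "RM < 2"
    and Z: "\<And>n. dist (Z n) (S (X n)) \<le> eps n"
    and X: "\<And>n. X (Suc n) = (1 - eta n) *\<^sub>R X n + eta n *\<^sub>R Z n"
  shows "\<exists>z. S z = z \<and> X \<longlonglongrightarrow> z"
proof -
  have cpos: "0 < Rm * (2 - RM)" using Rm RM by simp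
  have step1: "norm (X (Suc n) - q) \<le> norm (X n - q) + 2 * eps n" if "S q = q" for q n
    using fejer_step(1)[OF firm that conjunct1[OF eta] conjunct2[OF eta] Rm RM Z X] .
  have step2: "Rm * (2 - RM) * (norm (S (X n) - X n))^2 \<le> (norm (X n - q))^2 - (max 0 (norm (X (Suc n) - q) - 2 * eps n))^2"
    if "S q = q" for q n
    using fejer_step(2)[OF firm that conjunct1[OF eta] conjunct2[OF eta] Rm RM Z X] .
  have e0: "eps \<longlonglongrightarrow> 0" using eps(2) by (rule summable_LIMSEQ_zero)
  have aconv: "\<exists>L. (\<lambda>n. norm (X n - q)) \<longlonglongrightarrow> L" if q: "S q = q" for q
  proof -
    define b where "b n = norm (X n - q) - (\<Sum>k<n. 2 * eps k)" for n
    have "decseq b"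
      unfolding decseq_Suc_iff b_def using step1[OF q] by (simp add: algebra_simps)
    moreover have "\<forall>i. - (\<Sum>k. 2 * eps k) \<le> b i"
    proof
      fix i
      have "(\<Sum>k<i. 2 * eps k) \<le> (\<Sum>k. 2 * eps k)"
        using summable_mult[OF eps(2), of 2] eps(1) by (intro sum_le_suminf) auto
      then show "- (\<Sum>k. 2 * eps k) \<le> b i" unfolding b_def using norm_ge_zero[of "X i - q"] by linarith
    qed
    ultimately obtain Lb where Lb: "b \<longlonglongrightarrow> Lb" by (rule decseq_convergent)
    have "(\<lambda>n. \<Sum>k<n. 2 * eps k) \<longlonglongrightarrow> (\<Sum>k. 2 * eps k)"
      using summable_LIMSEQ[OF summable_mult[OF eps(2), of 2]] .
    then have "(\<lambda>n. b n + (\<Sum>k<n. 2 * eps k)) \<longlonglongrightarrow> Lb + (\<Sum>k. 2 * eps k)"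
      using Lb by (rule tendsto_add[rotated])
    then show ?thesis unfolding b_def by auto
  qed
  obtain q0 where q0: "S q0 = q0" using fixex by blast
  obtain L0 where L0: "(\<lambda>n. norm (X n - q0)) \<longlonglongrightarrow> L0" using aconv[OF q0] by blast
  have res: "(\<lambda>n. norm (S (X n) - X n)) \<longlonglongrightarrow> 0"
  proof -
    define u where "u n = (norm (X n - q0))^2 - (max 0 (norm (X (Suc n) - q0) - 2 * eps n))^2" for n
    have L0s: "(\<lambda>n. norm (X (Suc n) - q0)) \<longlonglongrightarrow> L0" using L0 by (rule LIMSEQ_Suc)
    have L0nn: "0 \<le> L0" using L0 by (rule tendsto_lowerbound) auto
    have "u \<longlonglongrightarrow> L0^2 - (max 0 (L0 - 2 * 0))^2"
      unfolding u_def by (intro tendsto_intros L0 L0s e0)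
    then have u0: "u \<longlonglongrightarrow> 0" using L0nn by simp
    have "(\<lambda>n. u n / (Rm * (2 - RM))) \<longlonglongrightarrow> 0 / (Rm * (2 - RM))"
      using u0 cpos by (intro tendsto_divide) auto
    then have u1: "(\<lambda>n. u n / (Rm * (2 - RM))) \<longlonglongrightarrow> 0" by simp
    have "(\<lambda>n. (norm (S (X n) - X n))^2) \<longlonglongrightarrow> 0"
    proof (rule tendsto_sandwich[OF _ _ tendsto_const u1])
      show "\<forall>\<^sub>F n in sequentially. 0 \<le> (norm (S (X n) - X n))^2" by simp
      show "\<forall>\<^sub>F n in sequentially. (norm (S (X n) - X n))^2 \<le> u n / (Rm * (2 - RM))"
      proof (rule always_eventually, rule allI)
        fix n
        have "Rm * (2 - RM) * (norm (S (X n) - X n))^2 \<le> u n" unfolding u_def by (rule step2[OF q0])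
        then show "(norm (S (X n) - X n))^2 \<le> u n / (Rm * (2 - RM))"
          using cpos by (simp add: le_divide_eq mult.commute)
      qed
    qed
    then have "(\<lambda>n. sqrt ((norm (S (X n) - X n))^2)) \<longlonglongrightarrow> sqrt 0"
      by (rule tendsto_real_sqrt)
    then show ?thesis by simp
  qed
  have nonexp: "norm (S y1 - S y2) \<le> norm (y1 - y2)" for y1 y2
  proof -
    have "(norm (S y1 - S y2))^2 \<le> norm (y1 - y2) * norm (S y1 - S y2)"
      using firm[of y1 y2] Cauchy_Schwarz_ineq2[of "y1 - y2" "S y1 - S y2"] by linarith
    then show ?thesis
      by (metis mult_le_cancel_right norm_ge_zero power2_eq_square le_less not_le mult_zero_right)
  qed
  have Scont: "continuous_on UNIV S"
    by (rule lipschitz_on_continuous_on[of 1]) (auto simp: lipschitz_on_def dist_norm nonexp)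
  have "bounded (range X)"
  proof -
    have "convergent (\<lambda>n. norm (X n - q0))" using L0 by (auto simp: convergent_def)
    then have "Bseq (\<lambda>n. norm (X n - q0))" by (rule convergent_imp_Bseq)
    then obtain B where B: "\<And>n. norm (norm (X n - q0)) \<le> B" unfolding Bseq_def by blast
    have "norm (X n) \<le> B + norm q0" for n
      using B[of n] norm_triangle_ineq2[of "X n" q0] by simp
    then show ?thesis unfolding bounded_iff by blast
  qed
  then obtain z r where r: "strict_mono r" and zr: "(X \<circ> r) \<longlonglongrightarrow> z"
    using bounded_imp_convergent_subsequence by blast
  have "S z = z"
  proof -
    have "((\<lambda>n. S (X (r n))) \<longlonglongrightarrow> S z)"
      using continuous_on_tendsto_compose[OF Scont zr] by (simp add: o_def)
    moreover have "(\<lambda>n. norm (S (X (r n)) - X (r n))) \<longlonglongrightarrow> 0"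
      using LIMSEQ_subseq_LIMSEQ[OF res r] by (simp add: o_def)
    then have "(\<lambda>n. S (X (r n)) - X (r n)) \<longlonglongrightarrow> 0" by (simp add: tendsto_norm_zero_iff)
    ultimately have "(\<lambda>n. S (X (r n)) - (S (X (r n)) - X (r n))) \<longlonglongrightarrow> S z - 0"
      by (intro tendsto_diff)
    then have "(\<lambda>n. X (r n)) \<longlonglongrightarrow> S z" by simp
    moreover have "(\<lambda>n. X (r n)) \<longlonglongrightarrow> z" using zr by (simp add: o_def)
    ultimately show ?thesis using LIMSEQ_unique by blast
  qed
  moreover have "X \<longlonglongrightarrow> z"
  proof -
    obtain L where L: "(\<lambda>n. norm (X n - z)) \<longlonglongrightarrow> L" using aconv[OF \<open>S z = z\<close>] by blast
    have "(\<lambda>n. X (r n) - z) \<longlonglongrightarrow> 0" using zr by (simp add: o_def LIM_zero)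
    then have "(\<lambda>n. norm (X (r n) - z)) \<longlonglongrightarrow> 0" by (simp add: tendsto_norm_zero_iff)
    moreover have "(\<lambda>n. norm (X (r n) - z)) \<longlonglongrightarrow> L"
      using LIMSEQ_subseq_LIMSEQ[OF L r] by (simp add: o_def)
    ultimately have "L = 0" using LIMSEQ_unique by blast
    then have "(\<lambda>n. norm (X n - z)) \<longlonglongrightarrow> 0" using L by simp
    then have "(\<lambda>n. X n - z) \<longlonglongrightarrow> 0" by (simp add: tendsto_norm_zero_iff)
    then show ?thesis by (simp add: LIM_zero_iff)
  qed
  ultimately show ?thesis by blast
qed


theorem mainTheorem8:
  fixes p :: "'n::finite \<Rightarrow> 'i::finite"
    and Qi :: "'i \<Rightarrow> (real^'n) set"
    and f :: "'i \<Rightarrow> real^'n \<Rightarrow> real"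
    and Df :: "'i \<Rightarrow> real^'n \<Rightarrow> real^'n"
    and Hf :: "'i \<Rightarrow> real^'n \<Rightarrow> real^'n^'n"
    and U :: "(real^'n) set"
    and \<tau> Rm RM :: real
    and eps eta :: "nat \<Rightarrow> real"
    and X Z :: "nat \<Rightarrow> real^'n"
  assumes blocks: "surj p"
    and Qi_block: "\<And>i. Qi i \<subseteq> {v. blk p i v = v}"
    and Qi_ne: "\<And>i. Qi i \<noteq> {}"
    and Qi_closed: "\<And>i. closed (Qi i)"
    and Qi_convex: "\<And>i. convex (Qi i)"
    and U_open: "open U"
    and Q_sub_U: "prof_set p Qi \<subseteq> U"
    and f_deriv: "\<And>i x. x \<in> U \<Longrightarrow> (f i has_derivative (\<lambda>h. Df i x \<bullet> h)) (at x)"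
    and Df_deriv: "\<And>i x. x \<in> U \<Longrightarrow> (Df i has_derivative (\<lambda>h. Hf i x *v h)) (at x)"
    and Hf_cont: "\<And>i. continuous_on U (Hf i)"
    and Df_bdd: "\<And>i. bounded (Df i ` prof_set p Qi)"
    and Hf_bdd: "\<And>i. bounded (Hf i ` prof_set p Qi)"
    and f_convex: "\<And>i x. x \<in> prof_set p Qi \<Longrightarrow> convex_on (Qi i) (\<lambda>v. f i (upd p i x v))"
    and F_mono: "\<forall>x\<in>prof_set p Qi. \<forall>y\<in>prof_set p Qi.
                   0 \<le> (pgrad p Df x - pgrad p Df y) \<bullet> (x - y)"
    and NE_exists: "\<exists>x. is_NE p Qi f x"
    and tau_pos: "\<tau> > 0"
    and P_mat: "P_matrix (Upsilon p (prof_set p Qi) (\<lambda>x. pjac p Hf x + \<tau> *\<^sub>R mat 1))"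
    and eps_nonneg: "\<And>n. eps n \<ge> 0"
    and eps_summable: "summable eps"
    and Rm_pos: "0 < Rm" and Rm_le_RM: "Rm \<le> RM" and RM_lt2: "RM < 2"
    and eta_range: "\<And>n. Rm \<le> eta n \<and> eta n \<le> RM"
    and X0: "X 0 \<in> prof_set p Qi"
    and Z_approx: "\<And>n. dist (Z n) (THE s. is_NE p Qi (reg_game p \<tau> (X n) f) s) \<le> eps n"
    and X_step: "\<And>n. X (Suc n) = (1 - eta n) *\<^sub>R X n + eta n *\<^sub>R Z n"
  shows "\<exists>xs. is_NE p Qi f xs \<and> X \<longlonglongrightarrow> xs"
proof -
  interpret game p Qi using Qi_block Qi_ne Qi_closed Qi_convex by unfold_locales auto
  define F where "F = pgrad p Df"
  have fder: "(f i has_derivative (\<lambda>h. Df i x \<bullet> h)) (at x)" if "x \<in> Q" for i x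
    using f_deriv Q_sub_U that by blast
  have "bounded (\<Union>i. Hf i ` Q)" by (rule bounded_UN) (auto simp: Hf_bdd)
  then obtain B where B: "\<And>M. M \<in> (\<Union>i. Hf i ` Q) \<Longrightarrow> norm M \<le> B" unfolding bounded_iff by blast
  define K where "K = real CARD('n) * real CARD('n) * B"
  have DfL: "norm (Df i x - Df i y) \<le> K * norm (x - y)" if "x \<in> Q" "y \<in> Q" for i x y
  proof (rule differentiable_bound[OF Q_convex _ _ that])
    fix z assume z: "z \<in> Q"
    show "(Df i has_derivative (\<lambda>h. Hf i z *v h)) (at z within Q)"
      using Df_deriv Q_sub_U z by (blast intro: has_derivative_at_withinI)
    have nz: "norm (Hf i z) \<le> B" using B z by blast
    show "onorm (\<lambda>h. Hf i z *v h) \<le> K" unfolding K_def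
    proof (rule onorm_le_matrix_component)
      fix k l
      have "\<bar>Hf i z $ k $ l\<bar> \<le> norm (Hf i z $ k)" by (rule component_le_norm_cart)
      also have "\<dots> \<le> norm (Hf i z)" by (rule Finite_Cartesian_Product.norm_nth_le)
      finally show "\<bar>Hf i z $ k $ l\<bar> \<le> B" using nz by linarith
    qed
  qed
  define LF where "LF = real CARD('n) * K"
  have FL: "norm (F x - F y) \<le> LF * norm (x - y)" if "x \<in> Q" "y \<in> Q" for x y
  proof -
    have "norm (F x - F y) \<le> (\<Sum>k\<in>UNIV. \<bar>(F x - F y) $ k\<bar>)" by (rule norm_le_l1_cart)
    also have "\<dots> \<le> (\<Sum>k\<in>(UNIV::'n set). K * norm (x - y))"
    proof (rule sum_mono)
      fix k :: 'n
      have "\<bar>(F x - F y) $ k\<bar> = \<bar>(Df (p k) x - Df (p k) y) $ k\<bar>" by (simp add: F_def pgrad_def)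
      also have "\<dots> \<le> norm (Df (p k) x - Df (p k) y)" by (rule component_le_norm_cart)
      also have "\<dots> \<le> K * norm (x - y)" by (rule DfL[OF that])
      finally show "\<bar>(F x - F y) $ k\<bar> \<le> K * norm (x - y)" .
    qed
    also have "\<dots> = LF * norm (x - y)" by (simp add: LF_def)
    finally show ?thesis .
  qed
  define G where "G y x = F x + \<tau> *\<^sub>R (x - y)" for y x
  have NE_reg: "is_NE p Qi (reg_game p \<tau> y f) s \<longleftrightarrow> s \<in> Q \<and> (\<forall>w\<in>Q. 0 \<le> G y s \<bullet> (w - s))" for y s
  proof
    assume ne: "is_NE p Qi (reg_game p \<tau> y f) s"
    then have sQ: "s \<in> Q" by (simp add: is_NE_def)
    have "\<forall>w\<in>Q. 0 \<le> pgrad p (\<lambda>i x. Df i x + \<tau> *\<^sub>R blk p i (x - y)) s \<bullet> (w - s)"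
      by (rule NE_imp_VI[where g="reg_game p \<tau> y f" and Dg="\<lambda>i x. Df i x + \<tau> *\<^sub>R blk p i (x - y)", OF sQ reg_deriv[where f=f and Df=Df and p=p and \<tau>=\<tau> and y=y, OF fder[OF sQ]] ne])
    then show "s \<in> Q \<and> (\<forall>w\<in>Q. 0 \<le> G y s \<bullet> (w - s))" using sQ by (simp add: pgrad_reg G_def F_def)
  next
    assume a: "s \<in> Q \<and> (\<forall>w\<in>Q. 0 \<le> G y s \<bullet> (w - s))"
    then have sQ: "s \<in> Q" by simp
    have "\<forall>w\<in>Q. 0 \<le> pgrad p (\<lambda>i x. Df i x + \<tau> *\<^sub>R blk p i (x - y)) s \<bullet> (w - s)"
      using a by (simp add: pgrad_reg G_def F_def)
    then show "is_NE p Qi (reg_game p \<tau> y f) s"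
      by (rule VI_imp_NE[where g="reg_game p \<tau> y f" and Dg="\<lambda>i x. Df i x + \<tau> *\<^sub>R blk p i (x - y)", OF sQ reg_deriv[where f=f and Df=Df and p=p and \<tau>=\<tau> and y=y, OF fder[OF sQ]] reg_convex[where y=y, OF f_convex[OF sQ] less_imp_le[OF tau_pos]]])
  qed
  have sm: "\<tau> * (norm (x1 - x2))^2 \<le> (G y x1 - G y x2) \<bullet> (x1 - x2)" if "x1 \<in> Q" "x2 \<in> Q" for y x1 x2
  proof -
    have "(G y x1 - G y x2) \<bullet> (x1 - x2) = (F x1 - F x2) \<bullet> (x1 - x2) + \<tau> * ((x1 - x2) \<bullet> (x1 - x2))"
      by (simp add: G_def algebra_simps inner_add_left inner_diff_left)
    moreover have "0 \<le> (F x1 - F x2) \<bullet> (x1 - x2)" using F_mono that by (simp add: F_def)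
    ultimately show ?thesis by (simp add: power2_norm_eq_inner)
  qed
  have Glip: "norm (G y x1 - G y x2) \<le> (LF + \<tau>) * norm (x1 - x2)" if "x1 \<in> Q" "x2 \<in> Q" for y x1 x2
  proof -
    have "G y x1 - G y x2 = (F x1 - F x2) + \<tau> *\<^sub>R (x1 - x2)" by (simp add: G_def algebra_simps)
    then have "norm (G y x1 - G y x2) \<le> norm (F x1 - F x2) + norm (\<tau> *\<^sub>R (x1 - x2))"
      by (metis norm_triangle_ineq)
    also have "\<dots> \<le> LF * norm (x1 - x2) + \<tau> * norm (x1 - x2)" using FL[OF that] tau_pos by simp
    finally show ?thesis by (simp add: algebra_simps)
  qed
  have VIuniq: "s1 = s2" if "s1 \<in> Q" "\<forall>w\<in>Q. 0 \<le> G y s1 \<bullet> (w - s1)" "s2 \<in> Q" "\<forall>w\<in>Q. 0 \<le> G y s2 \<bullet> (w - s2)" for y s1 s2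
  proof -
    have a: "0 \<le> G y s1 \<bullet> (s2 - s1)" "0 \<le> G y s2 \<bullet> (s1 - s2)" using that by auto
    have "(G y s1 - G y s2) \<bullet> (s1 - s2) = - (G y s1 \<bullet> (s2 - s1)) - G y s2 \<bullet> (s1 - s2)"
      by (simp add: inner_diff_left inner_diff_right algebra_simps)
    then have "\<tau> * (norm (s1 - s2))^2 \<le> 0" using sm[OF that(1) that(3), of y] a by linarith
    then have "norm (s1 - s2) = 0" using tau_pos by (simp add: mult_le_0_iff)
    then show ?thesis by simp
  qed
  have ex1: "\<exists>!s. is_NE p Qi (reg_game p \<tau> y f) s" for y
  proof -
    obtain s where s: "s \<in> Q" "\<forall>w\<in>Q. 0 \<le> G y s \<bullet> (w - s)"
      using VI_exists[OF Q_closed Q_convex Q_ne, of \<tau> "G y" "LF + \<tau>"] sm Glip tau_pos by blast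
    show ?thesis
    proof (rule ex1I[of _ s])
      show "is_NE p Qi (reg_game p \<tau> y f) s" using s NE_reg by blast
      fix s' assume "is_NE p Qi (reg_game p \<tau> y f) s'"
      then show "s' = s" using VIuniq s NE_reg by blast
    qed
  qed
  define S where "S y = (THE s. is_NE p Qi (reg_game p \<tau> y f) s)" for y
  have S: "S y \<in> Q" "\<forall>w\<in>Q. 0 \<le> G y (S y) \<bullet> (w - S y)" for y
    using theI'[OF ex1[of y]] NE_reg unfolding S_def by blast+
  have Sunique: "S y = s" if "s \<in> Q" "\<forall>w\<in>Q. 0 \<le> G y s \<bullet> (w - s)" for y s
    using VIuniq[OF S(1) S(2) that] .
  have firm: "(norm (S y1 - S y2))^2 \<le> (y1 - y2) \<bullet> (S y1 - S y2)" for y1 y2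
  proof -
    let ?s1 = "S y1" and ?s2 = "S y2"
    have a: "0 \<le> G y1 ?s1 \<bullet> (?s2 - ?s1)" "0 \<le> G y2 ?s2 \<bullet> (?s1 - ?s2)" using S by blast+
    have m: "0 \<le> (F ?s1 - F ?s2) \<bullet> (?s1 - ?s2)" using F_mono S(1) by (simp add: F_def)
    have "G y1 ?s1 \<bullet> (?s2 - ?s1) + G y2 ?s2 \<bullet> (?s1 - ?s2)
        = - ((F ?s1 - F ?s2) \<bullet> (?s1 - ?s2)) - \<tau> * ((?s1 - ?s2) \<bullet> (?s1 - ?s2)) + \<tau> * ((y1 - y2) \<bullet> (?s1 - ?s2))"
      by (simp add: G_def inner_add_left inner_diff_left inner_diff_right algebra_simps)
    then have "\<tau> * ((?s1 - ?s2) \<bullet> (?s1 - ?s2)) \<le> \<tau> * ((y1 - y2) \<bullet> (?s1 - ?s2))" using a m by linarith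
    then have "(?s1 - ?s2) \<bullet> (?s1 - ?s2) \<le> (y1 - y2) \<bullet> (?s1 - ?s2)" using tau_pos by simp
    then show ?thesis by (simp add: power2_norm_eq_inner)
  qed
  have VIF_NE: "is_NE p Qi f x \<longleftrightarrow> x \<in> Q \<and> (\<forall>w\<in>Q. 0 \<le> F x \<bullet> (w - x))" for x
  proof
    assume ne: "is_NE p Qi f x"
    then have xQ: "x \<in> Q" by (simp add: is_NE_def)
    show "x \<in> Q \<and> (\<forall>w\<in>Q. 0 \<le> F x \<bullet> (w - x))"
      using NE_imp_VI[where g=f and Dg=Df, OF xQ fder[OF xQ] ne] xQ by (simp add: F_def)
  next
    assume a: "x \<in> Q \<and> (\<forall>w\<in>Q. 0 \<le> F x \<bullet> (w - x))"
    then have xQ: "x \<in> Q" by simp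
    show "is_NE p Qi f x"
      by (rule VI_imp_NE[where g=f and Dg=Df, OF xQ fder[OF xQ] f_convex[OF xQ]]) (use a in \<open>simp add: F_def\<close>)
  qed
  have fixS: "S x = x \<longleftrightarrow> is_NE p Qi f x" for x
  proof
    assume "S x = x"
    then show "is_NE p Qi f x" using S[of x] VIF_NE by (simp add: G_def)
  next
    assume "is_NE p Qi f x"
    then have "x \<in> Q" "\<forall>w\<in>Q. 0 \<le> G x x \<bullet> (w - x)" using VIF_NE by (auto simp: G_def)
    then show "S x = x" by (rule Sunique)
  qed
  have "\<exists>q. S q = q" using NE_exists fixS by blast
  moreover have Zs: "dist (Z n) (S (X n)) \<le> eps n" for n using Z_approx unfolding S_def .
  ultimately obtain z where z: "S z = z" "X \<longlonglongrightarrow> z"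
    using KM_conv[OF firm _ eps_nonneg eps_summable eta_range Rm_pos RM_lt2 Zs X_step]
    by blast
  then show ?thesis using fixS by blast
qed

end
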